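(* Let $L\in\mathbb N$ satisfy $\operatorname{rank}\mathcal O_L(\Sigma_s)=n$ and let $K=[A_L,\dots,A_1,B_L,\dots,B_1]\in\mathbb R^{m\times L(m+r)}$ with $A_i\in\mathbb R^{m\times m}$, $B_i\in\mathbb R^{m\times r}$. Consider the dynamic output feedback controller $\mathbf K_s$: $\xi(t+1)=\Xi\xi(t)+\Lambda y(t)$, $u(t)=\Omega\xi(t)$, $\xi\in\mathbb R^{Lm}$, $t\ge0$, where $\Xi\in\mathbb R^{Lm\times Lm}$ has $I_m$ in blocks $(k+1,k)$, $k=1,\dots,L-1$, last block column $[A_L;A_{L-1};\dots;A_1]$, and zeros elsewhere; $\Lambda=[B_L;B_{L-1};\dots;B_1]$; $\Omega=[0,\dots,0,I_m]$; and $\xi(0)=\mathcal O_L(\mathbf K_s)^{-1}[I,\,-\mathcal H_L(\mathbf K_s)]\,v(L)$, where $\mathcal O_L(\mathbf K_s)=[\Omega^\top,(\Omega\Xi)^\top,\dots,(\Omega\Xi^{L-1})^\top]^\top$ and $\mathcal H_L(\mathbf K_s)$ is the block lower-triangular Toeplitz matrix with $(i,j)$ block $G_{i-j}$, $G_0=0$, $G_k=\Omega\Xi^{k-1}\Lambda$. Then the signals $u$ and $y$ of the closed loop of the IOH system $v(t+1)=\Theta v(t)+\Pi u(t)$, $y(t)=C\Gamma v(t)$ with the IOH feedback $u(t)=Kv(t)$, $t\ge L$, are identical to those of the feedback interconnection of $\Sigma_s$ and $\mathbf K_s$.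
   Context: System $\Sigma_s$: $x(t+1)=Ax(t)+Bu(t)$, $y(t)=Cx(t)$, $t\ge0$, $x\in\mathbb R^n,u\in\mathbb R^m,y\in\mathbb R^r$; standing assumptions: $(A,B,C)$ minimal and $A$ Schur. $\mathcal R_L(\Sigma_s)=[A^{L-1}B,\dots,B]$, $\mathcal O_L(\Sigma_s)=[C^\top,\dots,(CA^{L-1})^\top]^\top$, $\mathcal H_L(\Sigma_s)$ the $Lr\times Lm$ block lower-triangular Toeplitz matrix with $(i,j)$ block $H_{i-j}$, $H_0=0$, $H_k=CA^{k-1}B$. IOH: $v(t)=[u(t-L)^\top,\dots,u(t-1)^\top,y(t-L)^\top,\dots,y(t-1)^\top]^\top\in\mathbb R^{L(m+r)}$, $t\ge L$; $v(L)$ is the IOH at time $L$ (common to both loops). $\Gamma=[\mathcal R_L-A^L\mathcal O_L^\dagger\mathcal H_L,\ A^L\mathcal O_L^\dagger]$; $\Theta=\mathrm{diag}(S_m,S_r)+EC\Gamma$, with $S_k$ the $Lk\times Lk$ block matrix having $I_k$ in blocks $(i,i+1)$, $i<L$, zeros elsewhere, $E$ having $I_r$ in its last $r$ rows, zeros elsewhere; $\Pi\in\mathbb R^{L(m+r)\times m}$ has $I_m$ in rows $(L-1)m+1,\dots,Lm$, zeros elsewhere. *)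

theory Defs
  imports "Jordan_Normal_Form.Spectral_Radius" "Jordan_Normal_Form.DL_Rank"
    "Jordan_Normal_Form.Gauss_Jordan_Elimination"
begin

text \<open>Observability matrix O_L = [C; CA; ...; C A^(L-1)], of size (L r) x n,
  where r = dim_row C and n = dim_col C.\<close>
definition obs_mat :: "nat \<Rightarrow> real mat \<Rightarrow> real mat \<Rightarrow> real mat" where
  "obs_mat L C A = mat (L * dim_row C) (dim_col C)
     (\<lambda>(i, j). (C * A ^\<^sub>m (i div dim_row C)) $$ (i mod dim_row C, j))"

text \<open>Reachability matrix R_L = [A^(L-1) B, ..., A B, B], of size n x (L m).\<close>
definition reach_mat :: "nat \<Rightarrow> real mat \<Rightarrow> real mat \<Rightarrow> real mat" where
  "reach_mat L A B = mat (dim_row B) (L * dim_col B)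
     (\<lambda>(i, j). (A ^\<^sub>m (L - 1 - j div dim_col B) * B) $$ (i, j mod dim_col B))"

text \<open>Block lower-triangular Toeplitz matrix H_L with (i,j) block H_(i-j),
  H_0 = 0, H_k = C A^(k-1) B; size (L r) x (L m).\<close>
definition toep_mat :: "nat \<Rightarrow> real mat \<Rightarrow> real mat \<Rightarrow> real mat \<Rightarrow> real mat" where
  "toep_mat L A B C = mat (L * dim_row C) (L * dim_col B)
     (\<lambda>(i, j). if j div dim_col B < i div dim_row C
               then (C * A ^\<^sub>m (i div dim_row C - j div dim_col B - 1) * B)
                      $$ (i mod dim_row C, j mod dim_col B)
               else 0)"

definition pinv :: "real mat \<Rightarrow> real mat" where
  "pinv M = (THE X. X \<in> carrier_mat (dim_col M) (dim_row M) \<and>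
       M * X * M = M \<and> X * M * X = X \<and>
       (M * X)\<^sup>T = M * X \<and> (X * M)\<^sup>T = X * M)"

definition hcat :: "real mat \<Rightarrow> real mat \<Rightarrow> real mat" where
  "hcat M1 M2 = mat (dim_row M1) (dim_col M1 + dim_col M2)
     (\<lambda>(i, j). if j < dim_col M1 then M1 $$ (i, j) else M2 $$ (i, j - dim_col M1))"

definition rank_mat :: "real mat \<Rightarrow> nat" where
  "rank_mat M = vec_space.rank (dim_row M) M"

definition controllable :: "real mat \<Rightarrow> real mat \<Rightarrow> bool" where
  "controllable A B \<longleftrightarrow> rank_mat (reach_mat (dim_row A) A B) = dim_row A"

definition observable :: "real mat \<Rightarrow> real mat \<Rightarrow> bool" where
  "observable C A \<longleftrightarrow> rank_mat (obs_mat (dim_row A) C A) = dim_row A"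

definition minimal_sys :: "real mat \<Rightarrow> real mat \<Rightarrow> real mat \<Rightarrow> bool" where
  "minimal_sys A B C \<longleftrightarrow> controllable A B \<and> observable C A"

definition schur :: "real mat \<Rightarrow> bool" where
  "schur A \<longleftrightarrow> (\<forall>z \<in> spectrum (map_mat complex_of_real A). cmod z < 1)"

definition Gamma_mat :: "nat \<Rightarrow> real mat \<Rightarrow> real mat \<Rightarrow> real mat \<Rightarrow> real mat" where
  "Gamma_mat L A B C =
     hcat (reach_mat L A B - A ^\<^sub>m L * pinv (obs_mat L C A) * toep_mat L A B C)
          (A ^\<^sub>m L * pinv (obs_mat L C A))"

definition shift_mat :: "nat \<Rightarrow> nat \<Rightarrow> real mat" where
  "shift_mat L k = mat (L * k) (L * k) (\<lambda>(a, b). if b = a + k then 1 else 0)"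

definition E_mat :: "nat \<Rightarrow> nat \<Rightarrow> nat \<Rightarrow> real mat" where
  "E_mat L m r = mat (L * (m + r)) r (\<lambda>(a, b). if a = L * (m + r) - r + b then 1 else 0)"

definition Theta_mat :: "nat \<Rightarrow> real mat \<Rightarrow> real mat \<Rightarrow> real mat \<Rightarrow> real mat" where
  "Theta_mat L A B C =
     four_block_mat (shift_mat L (dim_col B)) (0\<^sub>m (L * dim_col B) (L * dim_row C))
                    (0\<^sub>m (L * dim_row C) (L * dim_col B)) (shift_mat L (dim_row C))
     + E_mat L (dim_col B) (dim_row C) * C * Gamma_mat L A B C"

definition Pi_mat :: "nat \<Rightarrow> nat \<Rightarrow> nat \<Rightarrow> real mat" where
  "Pi_mat L m r = mat (L * (m + r)) m (\<lambda>(a, b). if a = (L - 1) * m + b then 1 else 0)"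

text \<open>Input-output history v(t) = [u(t-L);...;u(t-1); y(t-L);...;y(t-1)] (for t \<ge> L).\<close>
definition ioh :: "nat \<Rightarrow> nat \<Rightarrow> nat \<Rightarrow> (nat \<Rightarrow> real vec) \<Rightarrow> (nat \<Rightarrow> real vec) \<Rightarrow> nat \<Rightarrow> real vec" where
  "ioh L m r u y t = vec (L * (m + r))
     (\<lambda>a. if a < L * m then u (t - L + a div m) $ (a mod m)
          else y (t - L + (a - L * m) div r) $ ((a - L * m) mod r))"

definition K_A :: "nat \<Rightarrow> nat \<Rightarrow> real mat \<Rightarrow> nat \<Rightarrow> real mat" where
  "K_A L m K i = mat m m (\<lambda>(a, b). K $$ (a, (L - i) * m + b))"

definition K_B :: "nat \<Rightarrow> nat \<Rightarrow> nat \<Rightarrow> real mat \<Rightarrow> nat \<Rightarrow> real mat" where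
  "K_B L m r K i = mat m r (\<lambda>(a, b). K $$ (a, L * m + (L - i) * r + b))"

definition Xi_mat :: "nat \<Rightarrow> nat \<Rightarrow> real mat \<Rightarrow> real mat" where
  "Xi_mat L m K = mat (L * m) (L * m)
     (\<lambda>(a, b). if (L - 1) * m \<le> b then K_A L m K (L - a div m) $$ (a mod m, b - (L - 1) * m)
              else if a = b + m then 1 else 0)"

definition Lambda_mat :: "nat \<Rightarrow> nat \<Rightarrow> nat \<Rightarrow> real mat \<Rightarrow> real mat" where
  "Lambda_mat L m r K = mat (L * m) r (\<lambda>(a, b). K_B L m r K (L - a div m) $$ (a mod m, b))"

definition Omega_mat :: "nat \<Rightarrow> nat \<Rightarrow> real mat" where
  "Omega_mat L m = mat m (L * m) (\<lambda>(a, b). if b = (L - 1) * m + a then 1 else 0)"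

end

theory Submission imports Defs begin

lemma sum_split_add: "(\<Sum>c<(a::nat)+b. f c) = (\<Sum>c<a. f c) + (\<Sum>c<b. f (a + c)::real)"
  by (induct b) (auto simp: add.assoc)

lemma sum_blocks: "(\<Sum>c<(L::nat)*k. f c) = (\<Sum>j<L. \<Sum>b<k. f (j*k+b)::real)"
proof (induct L)
  case (Suc L)
  have "(\<Sum>c<Suc L*k. f c) = (\<Sum>c<L*k + k. f c)" by (simp add: add.commute)
  also have "\<dots> = (\<Sum>c<L*k. f c) + (\<Sum>b<k. f (L*k+b))" by (rule sum_split_add)
  finally show ?case using Suc by simp
qed simp

lemma mult_mat_vec_sum: "A \<in> carrier_mat p q \<Longrightarrow> v \<in> carrier_vec q \<Longrightarrow> i < p \<Longrightarrow>
   (A *\<^sub>v v) $ i = (\<Sum>c<q. A $$ (i,c) * v $ c)"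
  by (auto simp: scalar_prod_def atLeast0LessThan intro!: sum.cong)

lemma pow_mat_Suc': "F \<in> carrier_mat p p \<Longrightarrow> F ^\<^sub>m Suc k = F * F ^\<^sub>m k"
proof (induct k)
  case 0 then show ?case by simp
next
  case (Suc k)
  have "F ^\<^sub>m Suc (Suc k) = (F * F ^\<^sub>m k) * F" using Suc by simp
  also have "\<dots> = F * (F ^\<^sub>m k * F)" using Suc.prems by (simp add: assoc_mult_mat[of _ p p _ p _ p])
  finally show ?case by simp
qed

lemma dyn_formula:
  fixes F G :: "real mat" and z w :: "nat \<Rightarrow> real vec"
  assumes F: "F \<in> carrier_mat p p" and G: "G \<in> carrier_mat p q"
    and z0: "z t0 \<in> carrier_vec p"
    and w: "\<And>s. s < k \<Longrightarrow> w (t0+s) \<in> carrier_vec q"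
    and dyn: "\<And>s. s < k \<Longrightarrow> z (Suc (t0+s)) = F *\<^sub>v z (t0+s) + G *\<^sub>v w (t0+s)"
  shows "z (t0+k) \<in> carrier_vec p \<and> (\<forall>M h b. M \<in> carrier_mat h p \<longrightarrow> b < h \<longrightarrow>
     (M *\<^sub>v z (t0+k)) $ b = (M * F ^\<^sub>m k *\<^sub>v z t0) $ b
        + (\<Sum>l<k. (M * F ^\<^sub>m (k-1-l) * G *\<^sub>v w (t0+l)) $ b))"
  using w dyn
proof (induct k)
  case 0
  then show ?case using z0 F by (auto simp: carrier_matD)
next
  case (Suc k)
  have IH: "z (t0+k) \<in> carrier_vec p \<and> (\<forall>M h b. M \<in> carrier_mat h p \<longrightarrow> b < h \<longrightarrow>
     (M *\<^sub>v z (t0+k)) $ b = (M * F ^\<^sub>m k *\<^sub>v z t0) $ b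
        + (\<Sum>l<k. (M * F ^\<^sub>m (k-1-l) * G *\<^sub>v w (t0+l)) $ b))"
    using Suc by auto
  have wk: "w (t0+k) \<in> carrier_vec q" using Suc by auto
  have zS: "z (t0 + Suc k) = F *\<^sub>v z (t0+k) + G *\<^sub>v w (t0+k)" using Suc by auto
  have zc: "z (t0 + Suc k) \<in> carrier_vec p" using zS IH wk F G by auto
  show ?case
  proof (intro conjI zc allI impI)
    fix M :: "real mat" and h b assume M: "M \<in> carrier_mat h p" and b: "b < h"
    have MF: "M * F \<in> carrier_mat h p" using M F by auto
    have "M *\<^sub>v z (t0 + Suc k) = (M * F) *\<^sub>v z (t0+k) + (M * G) *\<^sub>v w (t0+k)"
      unfolding zS using M F G IH wk
      by (subst mult_add_distrib_mat_vec[of _ h p]) auto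
    hence "(M *\<^sub>v z (t0 + Suc k)) $ b = ((M * F) *\<^sub>v z (t0+k)) $ b + ((M * G) *\<^sub>v w (t0+k)) $ b"
      using b M G by simp
    also have "((M * F) *\<^sub>v z (t0+k)) $ b = (M * F * F ^\<^sub>m k *\<^sub>v z t0) $ b
        + (\<Sum>l<k. (M * F * F ^\<^sub>m (k-1-l) * G *\<^sub>v w (t0+l)) $ b)"
      using IH MF b by blast
    also have "M * F * F ^\<^sub>m k = M * F ^\<^sub>m Suc k"
      using M F by (subst pow_mat_Suc'[OF F]) (simp add: assoc_mult_mat[of _ h p _ p _ p])
    also have "(\<Sum>l<k. (M * F * F ^\<^sub>m (k-1-l) * G *\<^sub>v w (t0+l)) $ b)
       = (\<Sum>l<k. (M * F ^\<^sub>m (Suc k-1-l) * G *\<^sub>v w (t0+l)) $ b)"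
    proof (rule sum.cong[OF refl])
      fix l assume "l \<in> {..<k}"
      hence "Suc k - 1 - l = Suc (k-1-l)" by auto
      hence "F ^\<^sub>m (Suc k-1-l) = F * F ^\<^sub>m (k-1-l)" using pow_mat_Suc'[OF F] by simp
      thus "(M * F * F ^\<^sub>m (k-1-l) * G *\<^sub>v w (t0+l)) $ b = (M * F ^\<^sub>m (Suc k-1-l) * G *\<^sub>v w (t0+l)) $ b"
        using M F by (simp add: assoc_mult_mat[of _ h p _ p _ p])
    qed
    also have "(M * G) = M * F ^\<^sub>m (Suc k-1-k) * G" using M F by simp
    finally show "(M *\<^sub>v z (t0 + Suc k)) $ b = (M * F ^\<^sub>m Suc k *\<^sub>v z t0) $ b
        + (\<Sum>l<Suc k. (M * F ^\<^sub>m (Suc k-1-l) * G *\<^sub>v w (t0+l)) $ b)"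
      by simp
  qed
qed

lemma idx_lt: "l < L \<Longrightarrow> e < (k::nat) \<Longrightarrow> l*k+e < L*k"
proof -
  assume a: "l < L" "e < k"
  have "l*k+e < Suc l * k" using a by simp
  also have "Suc l * k \<le> L*k" using a by (intro mult_le_mono1) simp
  finally show ?thesis .
qed

definition bv :: "nat \<Rightarrow> nat \<Rightarrow> (nat \<Rightarrow> real vec) \<Rightarrow> nat \<Rightarrow> real vec" where
  "bv L k w t0 = vec (L*k) (\<lambda>a. w (t0 + a div k) $ (a mod k))"

lemma bv_carrier[simp]: "bv L k w t0 \<in> carrier_vec (L*k)"
  by (simp add: bv_def)

lemma dim_bv[simp]: "dim_vec (bv L k w t0) = L*k"
  by (simp add: bv_def)

lemma bv_index: "l < L \<Longrightarrow> e < k \<Longrightarrow> bv L k w t0 $ (l*k+e) = w (t0+l) $ e"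
proof -
  assume "l < L" "e < k"
  hence "l*k+e < L*k" by (rule idx_lt)
  thus ?thesis using \<open>e < k\<close> by (simp add: bv_def)
qed

lemma ioh_split: "ioh L m r u y t = bv L m u (t-L) @\<^sub>v bv L r y (t-L)"
  by (rule eq_vecI) (auto simp: ioh_def bv_def algebra_simps)

lemma hcat_mult:
  assumes "M1 \<in> carrier_mat p c1" "M2 \<in> carrier_mat p c2" "w1 \<in> carrier_vec c1" "w2 \<in> carrier_vec c2"
  shows "hcat M1 M2 *\<^sub>v (w1 @\<^sub>v w2) = M1 *\<^sub>v w1 + M2 *\<^sub>v w2"
proof (rule eq_vecI)
  have H: "hcat M1 M2 \<in> carrier_mat p (c1+c2)" using assms by (auto simp: hcat_def)
  fix i assume "i < dim_vec (M1 *\<^sub>v w1 + M2 *\<^sub>v w2)"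
  hence i: "i < p" using assms by auto
  have "(hcat M1 M2 *\<^sub>v (w1 @\<^sub>v w2)) $ i = (\<Sum>c<c1+c2. hcat M1 M2 $$ (i,c) * (w1 @\<^sub>v w2) $ c)"
    using H assms i by (intro mult_mat_vec_sum) auto
  also have "\<dots> = (\<Sum>c<c1. M1 $$ (i,c) * w1 $ c) + (\<Sum>c<c2. M2 $$ (i,c) * w2 $ c)"
    unfolding sum_split_add using assms i by (auto simp: hcat_def)
  also have "\<dots> = (M1 *\<^sub>v w1) $ i + (M2 *\<^sub>v w2) $ i"
    using assms i by (simp only: mult_mat_vec_sum)
  also have "\<dots> = (M1 *\<^sub>v w1 + M2 *\<^sub>v w2) $ i"
    using assms i by simp
  finally show "(hcat M1 M2 *\<^sub>v (w1 @\<^sub>v w2)) $ i = (M1 *\<^sub>v w1 + M2 *\<^sub>v w2) $ i" .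
qed (use assms in \<open>auto simp: hcat_def\<close>)

lemma obs_carrier: "C \<in> carrier_mat r n \<Longrightarrow> obs_mat L C A \<in> carrier_mat (L*r) n"
  by (auto simp: obs_mat_def)

lemma obs_mult:
  assumes C: "C \<in> carrier_mat r n" and A: "A \<in> carrier_mat n n" and x: "x \<in> carrier_vec n"
    and i: "i < L*r"
  shows "(obs_mat L C A *\<^sub>v x) $ i = (C * A ^\<^sub>m (i div r) *\<^sub>v x) $ (i mod r)"
proof -
  have r: "0 < r" using i by (cases r) auto
  have "(obs_mat L C A *\<^sub>v x) $ i = (\<Sum>c<n. obs_mat L C A $$ (i,c) * x $ c)"
    using obs_carrier[OF C] x i by (intro mult_mat_vec_sum) auto
  also have "\<dots> = (\<Sum>c<n. (C * A ^\<^sub>m (i div r)) $$ (i mod r,c) * x $ c)"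
    using C i by (intro sum.cong) (auto simp: obs_mat_def)
  also have "\<dots> = (C * A ^\<^sub>m (i div r) *\<^sub>v x) $ (i mod r)"
    using C A x r by (intro mult_mat_vec_sum[symmetric]) auto
  finally show ?thesis .
qed

lemma sum_if_less: "j \<le> (L::nat) \<Longrightarrow> (\<Sum>l<L. if l < j then g l else 0) = (\<Sum>l<j. g l :: real)"
proof -
  assume "j \<le> L"
  have "(\<Sum>l<L. if l < j then g l else 0) = (\<Sum>l\<in>{l\<in>{..<L}. l < j}. g l)"
    by (rule sum.inter_filter[symmetric]) simp
  also have "{l\<in>{..<L}. l < j} = {..<j}" using \<open>j \<le> L\<close> by auto
  finally show ?thesis .
qed

lemma toep_carrier: "B \<in> carrier_mat n m \<Longrightarrow> C \<in> carrier_mat r n \<Longrightarrow> toep_mat L A B C \<in> carrier_mat (L*r) (L*m)"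
  by (auto simp: toep_mat_def)

lemma toep_mult:
  assumes A: "A \<in> carrier_mat n n" and B: "B \<in> carrier_mat n m" and C: "C \<in> carrier_mat r n"
    and u: "\<And>l. l < L \<Longrightarrow> u (t0+l) \<in> carrier_vec m" and i: "i < L*r"
  shows "(toep_mat L A B C *\<^sub>v bv L m u t0) $ i
     = (\<Sum>l < i div r. (C * A ^\<^sub>m (i div r - 1 - l) * B *\<^sub>v u (t0+l)) $ (i mod r))"
proof -
  have r: "0 < r" using i by (cases r) auto
  have j: "i div r < L" using i by (simp add: less_mult_imp_div_less)
  have "(toep_mat L A B C *\<^sub>v bv L m u t0) $ i = (\<Sum>c<L*m. toep_mat L A B C $$ (i,c) * bv L m u t0 $ c)"
    using toep_carrier[OF B C] i by (intro mult_mat_vec_sum) auto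
  also have "\<dots> = (\<Sum>l<L. \<Sum>e<m. toep_mat L A B C $$ (i,l*m+e) * bv L m u t0 $ (l*m+e))"
    by (rule sum_blocks)
  also have "\<dots> = (\<Sum>l<L. if l < i div r then (C * A ^\<^sub>m (i div r - 1 - l) * B *\<^sub>v u (t0+l)) $ (i mod r) else 0)"
  proof (rule sum.cong[OF refl])
    fix l assume l: "l \<in> {..<L}"
    have lm: "\<And>e. e < m \<Longrightarrow> l*m+e < L*m" using l idx_lt by auto
    show "(\<Sum>e<m. toep_mat L A B C $$ (i,l*m+e) * bv L m u t0 $ (l*m+e))
      = (if l < i div r then (C * A ^\<^sub>m (i div r - 1 - l) * B *\<^sub>v u (t0+l)) $ (i mod r) else 0)"
    proof (cases "l < i div r")
      case True
      have "(\<Sum>e<m. toep_mat L A B C $$ (i,l*m+e) * bv L m u t0 $ (l*m+e))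
          = (\<Sum>e<m. (C * A ^\<^sub>m (i div r - 1 - l) * B) $$ (i mod r, e) * u (t0+l) $ e)"
        using True lm l i B C by (intro sum.cong) (auto simp: toep_mat_def bv_index)
      also have "\<dots> = (C * A ^\<^sub>m (i div r - 1 - l) * B *\<^sub>v u (t0+l)) $ (i mod r)"
        using A B C u l r by (intro mult_mat_vec_sum[symmetric]) auto
      finally show ?thesis using True by simp
    next
      case False
      then show ?thesis using lm i B C by (auto simp: toep_mat_def intro!: sum.neutral)
    qed
  qed
  also have "\<dots> = (\<Sum>l < i div r. (C * A ^\<^sub>m (i div r - 1 - l) * B *\<^sub>v u (t0+l)) $ (i mod r))"
    using j by (intro sum_if_less) simp
  finally show ?thesis .
qed

lemma reach_carrier: "B \<in> carrier_mat n m \<Longrightarrow> reach_mat L A B \<in> carrier_mat n (L*m)"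
  by (auto simp: reach_mat_def)

lemma reach_mult:
  assumes A: "A \<in> carrier_mat n n" and B: "B \<in> carrier_mat n m"
    and u: "\<And>l. l < L \<Longrightarrow> u (t0+l) \<in> carrier_vec m" and i: "i < n"
  shows "(reach_mat L A B *\<^sub>v bv L m u t0) $ i = (\<Sum>l<L. (A ^\<^sub>m (L-1-l) * B *\<^sub>v u (t0+l)) $ i)"
proof -
  have "(reach_mat L A B *\<^sub>v bv L m u t0) $ i = (\<Sum>c<L*m. reach_mat L A B $$ (i,c) * bv L m u t0 $ c)"
    using reach_carrier[OF B] i by (intro mult_mat_vec_sum) auto
  also have "\<dots> = (\<Sum>l<L. \<Sum>e<m. reach_mat L A B $$ (i,l*m+e) * bv L m u t0 $ (l*m+e))"
    by (rule sum_blocks)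
  also have "\<dots> = (\<Sum>l<L. (A ^\<^sub>m (L-1-l) * B *\<^sub>v u (t0+l)) $ i)"
  proof (rule sum.cong[OF refl])
    fix l assume l: "l \<in> {..<L}"
    have lm: "\<And>e. e < m \<Longrightarrow> l*m+e < L*m" using l idx_lt by auto
    have "(\<Sum>e<m. reach_mat L A B $$ (i,l*m+e) * bv L m u t0 $ (l*m+e))
        = (\<Sum>e<m. (A ^\<^sub>m (L-1-l) * B) $$ (i, e) * u (t0+l) $ e)"
      using lm l i B by (intro sum.cong) (auto simp: reach_mat_def bv_index)
    also have "\<dots> = (A ^\<^sub>m (L-1-l) * B *\<^sub>v u (t0+l)) $ i"
      using A B u l i by (intro mult_mat_vec_sum[symmetric]) auto
    finally show "(\<Sum>e<m. reach_mat L A B $$ (i,l*m+e) * bv L m u t0 $ (l*m+e))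
        = (A ^\<^sub>m (L-1-l) * B *\<^sub>v u (t0+l)) $ i" .
  qed
  finally show ?thesis .
qed

lemma (in vec_space) full_rank_inj:
  assumes A: "A \<in> carrier_mat n nc" and rk: "rank A = nc"
    and v: "v \<in> carrier_vec nc" and Av: "A *\<^sub>v v = 0\<^sub>v n"
  shows "v = 0\<^sub>v nc"
proof (rule ccontr)
  assume nz: "v \<noteq> 0\<^sub>v nc"
  have d: "distinct (cols A)"
  proof (rule ccontr)
    assume nd: "\<not> distinct (cols A)"
    obtain S where S: "maximal S (\<lambda>T. T \<subseteq> set (cols A) \<and> lin_indpt T)"
      using maximal_exists[of "(\<lambda>T. T \<subseteq> set (cols A) \<and> lin_indpt T)" "card (set (cols A))" "{}"]
      by (meson List.finite_set card_mono empty_iff empty_subsetI finite_lin_indpt2 rev_finite_subset)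
    then have "card S \<le> card (set (cols A))" by (simp add: card_mono maximal_def)
    moreover have "card (set (cols A)) < nc"
      using nd A card_distinct[of "cols A"] card_length[of "cols A"] by fastforce
    ultimately have "card S < nc" by simp
    then show False using rank_card_indpt[OF A S] rk by simp
  qed
  have "lin_indpt (set (cols A))" using full_rank_lin_indpt[OF A rk d] .
  moreover have "lin_dep (set (cols A))" using lin_depI[OF A v nz Av d] .
  ultimately show False by simp
qed

lemma self_sp_zero: "(v :: real vec) \<in> carrier_vec k \<Longrightarrow> v \<bullet> v = 0 \<Longrightarrow> v = 0\<^sub>v k"
proof -
  assume v: "v \<in> carrier_vec k" and z: "v \<bullet> v = 0"
  have "(\<Sum>i\<in>{0..<k}. v $ i * v $ i) = 0" using z v by (simp add: scalar_prod_def)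
  hence "\<forall>i\<in>{0..<k}. v $ i * v $ i = 0" by (subst sum_nonneg_eq_0_iff[symmetric]) auto
  thus ?thesis using v by (intro eq_vecI) auto
qed

lemma pinv_left:
  assumes Ob: "Ob \<in> carrier_mat p n" and rk: "rank_mat Ob = n"
  shows "pinv Ob * Ob = 1\<^sub>m n \<and> pinv Ob \<in> carrier_mat n p"
proof -
  have inj: "\<And>v. v \<in> carrier_vec n \<Longrightarrow> Ob *\<^sub>v v = 0\<^sub>v p \<Longrightarrow> v = 0\<^sub>v n"
    using vec_space.full_rank_inj[OF Ob] rk Ob unfolding rank_mat_def by auto
  define Ot where "Ot = transpose_mat Ob"
  have Ot: "Ot \<in> carrier_mat n p" using Ob by (simp add: Ot_def)
  define G where "G = Ot * Ob"
  have G: "G \<in> carrier_mat n n" using Ob Ot by (simp add: G_def)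
  have Ginj: "\<And>v. v \<in> carrier_vec n \<Longrightarrow> G *\<^sub>v v = 0\<^sub>v n \<Longrightarrow> v = 0\<^sub>v n"
  proof -
    fix v :: "real vec" assume v: "v \<in> carrier_vec n" and Gv: "G *\<^sub>v v = 0\<^sub>v n"
    have "(Ob *\<^sub>v v) \<bullet> (Ob *\<^sub>v v) = (Ot *\<^sub>v (Ob *\<^sub>v v)) \<bullet> v"
      unfolding Ot_def using transpose_vec_mult_scalar[OF Ob v, of "Ob *\<^sub>v v"] Ob v by auto
    also have "Ot *\<^sub>v (Ob *\<^sub>v v) = G *\<^sub>v v" unfolding G_def using Ot Ob v by simp
    finally have "(Ob *\<^sub>v v) \<bullet> (Ob *\<^sub>v v) = 0" using Gv v by simp
    hence "Ob *\<^sub>v v = 0\<^sub>v p" using Ob v by (intro self_sp_zero) auto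
    thus "v = 0\<^sub>v n" using inj v by simp
  qed
  have "det G \<noteq> 0" using det_0_iff_vec_prod_zero_field[OF G] Ginj by blast
  from det_non_zero_imp_unit[OF G this, of undefined]
  have "mat_inverse G \<noteq> None" using mat_inverse(1)[OF G, of undefined] by auto
  then obtain Gi where "mat_inverse G = Some Gi" by auto
  from mat_inverse(2)[OF G this] have GGi: "G * Gi = 1\<^sub>m n" and GiG: "Gi * G = 1\<^sub>m n"
    and Gi: "Gi \<in> carrier_mat n n" by auto
  have GT: "transpose_mat G = G" unfolding G_def Ot_def using Ob by (simp add: transpose_mult[of _ n p _ n])
  have GiT: "transpose_mat Gi = Gi"
  proof -
    have "transpose_mat Gi * G = transpose_mat (G * Gi)"
      using transpose_mult[OF G Gi] GT by simp
    hence L: "transpose_mat Gi * G = 1\<^sub>m n" using GGi by simp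
    have "transpose_mat Gi = transpose_mat Gi * (G * Gi)" using GGi Gi by simp
    also have "\<dots> = (transpose_mat Gi * G) * Gi" using Gi G by (simp add: assoc_mult_mat[of _ n n _ n _ n])
    also have "\<dots> = Gi" using L Gi by simp
    finally show ?thesis .
  qed
  define X where "X = Gi * Ot"
  have X: "X \<in> carrier_mat n p" using Gi Ot by (simp add: X_def)
  have XO: "X * Ob = 1\<^sub>m n"
    unfolding X_def using Gi Ot Ob GiG by (simp add: assoc_mult_mat[of _ n n _ p _ n] G_def)
  let ?P = "\<lambda>X. X \<in> carrier_mat (dim_col Ob) (dim_row Ob) \<and>
       Ob * X * Ob = Ob \<and> X * Ob * X = X \<and>
       transpose_mat (Ob * X) = Ob * X \<and> transpose_mat (X * Ob) = X * Ob"
  have PX: "?P X"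
  proof (intro conjI)
    show "X \<in> carrier_mat (dim_col Ob) (dim_row Ob)" using X Ob by simp
    show "Ob * X * Ob = Ob" using Ob X XO by (simp add: assoc_mult_mat[of _ p n _ p _ n])
    show "X * Ob * X = X" using Ob X XO by simp
    show "transpose_mat (X * Ob) = X * Ob" using XO by simp
    have "transpose_mat (Ob * X) = transpose_mat X * transpose_mat Ob"
      using transpose_mult[OF Ob X] .
    also have "transpose_mat X = transpose_mat Ot * transpose_mat Gi"
      unfolding X_def using transpose_mult[OF Gi Ot] .
    also have "\<dots> = Ob * Gi" using GiT by (simp add: Ot_def)
    also have "Ob * Gi * transpose_mat Ob = Ob * X"
      unfolding X_def Ot_def using Ob Gi by (simp add: assoc_mult_mat[of _ p n _ n _ p])
    finally show "transpose_mat (Ob * X) = Ob * X" .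
  qed
  have uniq: "Y = X" if PY: "?P Y" for Y
  proof -
    have Y: "Y \<in> carrier_mat n p" using PY Ob by simp
    have OYO: "Ob * Y * Ob = Ob" and YOY: "Y * Ob * Y = Y" and OYT: "transpose_mat (Ob * Y) = Ob * Y"
      using PY by auto
    have YO: "Y * Ob = 1\<^sub>m n"
    proof -
      have "(X * Ob) * (Y * Ob) = X * ((Ob * Y) * Ob)"
        using X Ob Y by (simp add: assoc_mult_mat[of _ n p _ n _ n] assoc_mult_mat[of _ p n _ p _ n])
      also have "\<dots> = 1\<^sub>m n" using OYO XO by simp
      finally show ?thesis using XO Y Ob by simp
    qed
    have OT: "transpose_mat Ob = transpose_mat Ob * (Ob * X)"
    proof -
      have "transpose_mat Ob = transpose_mat (Ob * X * Ob)" using PX by simp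
      also have "\<dots> = transpose_mat Ob * transpose_mat (Ob * X)"
        using transpose_mult[of "Ob * X" p p Ob n] Ob X by simp
      also have "\<dots> = transpose_mat Ob * (Ob * X)" using PX by simp
      finally show ?thesis .
    qed
    have "Y = Y * (Ob * Y)" using YOY Y Ob by (simp add: assoc_mult_mat[of _ n p _ n _ p])
    also have "\<dots> = Y * transpose_mat (Ob * Y)" using OYT by simp
    also have "transpose_mat (Ob * Y) = transpose_mat Y * transpose_mat Ob"
      using transpose_mult[OF Ob Y] .
    also have "transpose_mat Ob = transpose_mat Ob * (Ob * X)" by (rule OT)
    also have "Y * (transpose_mat Y * (transpose_mat Ob * (Ob * X))) = (Y * (transpose_mat Y * transpose_mat Ob)) * (Ob * X)"
      using Y Ob X by (simp add: assoc_mult_mat[of _ n p _ p _ p] assoc_mult_mat[of _ p n _ p _ p]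
          assoc_mult_mat[of _ n n _ p _ p] assoc_mult_mat[of _ p n _ n _ p] assoc_mult_mat[of _ n p _ n _ p])
    also have "transpose_mat Y * transpose_mat Ob = transpose_mat (Ob * Y)"
      using transpose_mult[OF Ob Y] by simp
    also have "\<dots> = Ob * Y" by (rule OYT)
    also have "Y * (Ob * Y) * (Ob * X) = (Y * Ob * Y) * Ob * X"
      using Y Ob X by (simp add: assoc_mult_mat[of _ n p _ n _ p] assoc_mult_mat[of _ n n _ p _ p]
          assoc_mult_mat[of _ p n _ p _ p] assoc_mult_mat[of _ n p _ n _ n])
    also have "\<dots> = X" using YOY YO X by simp
    finally show "Y = X" .
  qed
  have "pinv Ob = X" unfolding pinv_def using PX uniq by (rule the_equality)
  thus ?thesis using XO X by simp
qed

lemma Xi_carrier: "Xi_mat L m K \<in> carrier_mat (L*m) (L*m)" by (simp add: Xi_mat_def)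
lemma Lambda_carrier: "Lambda_mat L m r K \<in> carrier_mat (L*m) r" by (simp add: Lambda_mat_def)
lemma Omega_carrier: "Omega_mat L m \<in> carrier_mat m (L*m)" by (simp add: Omega_mat_def)

lemma OmXi_entry:
  assumes j: "j < L" and e: "e < m" and c: "c < (L-j)*m"
  shows "(Omega_mat L m * Xi_mat L m K ^\<^sub>m j) $$ (e, c) = (if c = (L-1-j)*m + e then 1 else 0)"
  using j e c
proof (induct j arbitrary: c)
  case 0
  have "Omega_mat L m * Xi_mat L m K ^\<^sub>m 0 = Omega_mat L m"
    using Omega_carrier[of L m] Xi_carrier[of L m K] by simp
  then show ?case using 0 by (simp add: Omega_mat_def)
next
  case (Suc j)
  let ?W = "Omega_mat L m * Xi_mat L m K ^\<^sub>m j"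
  have W: "?W \<in> carrier_mat m (L*m)" using Omega_carrier[of L m] Xi_carrier[of L m K] by auto
  have eq: "Omega_mat L m * Xi_mat L m K ^\<^sub>m Suc j = ?W * Xi_mat L m K"
    using Omega_carrier[of L m] Xi_carrier[of L m K]
    by (simp add: assoc_mult_mat[of _ m "L*m" _ "L*m" _ "L*m"])
  have Lj: "L - j = Suc (L - Suc j)" using Suc.prems by simp
  have cL: "c + m < L*m"
  proof -
    have "c + m < (L - Suc j) * m + m" using Suc.prems by simp
    also have "\<dots> = (L - j) * m" using Lj by simp
    also have "\<dots> \<le> L * m" by (intro mult_le_mono1) simp
    finally show ?thesis .
  qed
  have cm: "\<not> (L - 1) * m \<le> c"
  proof -
    have "(L - Suc j) * m \<le> (L-1)*m" by (intro mult_le_mono1) simp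
    moreover have "c < (L - Suc j) * m" using Suc.prems by simp
    ultimately show ?thesis by linarith
  qed
  have "(?W * Xi_mat L m K) $$ (e, c) = (\<Sum>d<L*m. ?W $$ (e,d) * Xi_mat L m K $$ (d,c))"
    using W Xi_carrier[of L m K] Suc.prems cL
    by (auto simp: scalar_prod_def atLeast0LessThan intro!: sum.cong)
  also have "\<dots> = (\<Sum>d<L*m. if d = c + m then ?W $$ (e,d) else 0)"
    using cm cL by (intro sum.cong) (auto simp: Xi_mat_def)
  also have "\<dots> = ?W $$ (e, c+m)" using cL by (simp add: sum.delta)
  also have "\<dots> = (if c + m = (L-1-j)*m + e then 1 else 0)"
  proof (rule Suc.hyps)
    show "j < L" "e < m" using Suc.prems by auto
    have "L - j = Suc (L - Suc j)" using Suc.prems by simp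
    thus "c + m < (L - j) * m" using Suc.prems by simp
  qed
  also have "(c + m = (L-1-j)*m + e) = (c = (L-1-Suc j)*m + e)"
  proof -
    have "L-1-j = Suc (L-1-Suc j)" using Suc.prems by simp
    thus ?thesis by simp
  qed
  finally show ?case unfolding eq .
qed

lemma OK_inj:
  assumes v: "v \<in> carrier_vec (L*m)" and Ov: "obs_mat L (Omega_mat L m) (Xi_mat L m K) *\<^sub>v v = 0\<^sub>v (L*m)"
  shows "v = 0\<^sub>v (L*m)"
proof -
  let ?O = "obs_mat L (Omega_mat L m) (Xi_mat L m K)"
  have step: "\<forall>c. (L-j)*m \<le> c \<longrightarrow> c < L*m \<longrightarrow> v $ c = 0" if "j \<le> L" for j
    using that
  proof (induct j)
    case 0 then show ?case by auto
  next
    case (Suc j)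
    have IH: "\<forall>c. (L-j)*m \<le> c \<longrightarrow> c < L*m \<longrightarrow> v $ c = 0" using Suc by auto
    have blk: "v $ ((L-1-j)*m + e) = 0" if e: "e < m" for e
    proof -
      have i: "j*m + e < L*m" using idx_lt[of j L e m] Suc.prems e by simp
      have "0 = (?O *\<^sub>v v) $ (j*m+e)" using Ov i by simp
      also have "\<dots> = (Omega_mat L m * Xi_mat L m K ^\<^sub>m j *\<^sub>v v) $ e"
        using obs_mult[OF Omega_carrier Xi_carrier v i] e by simp
      also have "\<dots> = (\<Sum>c<L*m. (Omega_mat L m * Xi_mat L m K ^\<^sub>m j) $$ (e,c) * v $ c)"
        using Omega_carrier[of L m] Xi_carrier[of L m K] v e by (intro mult_mat_vec_sum) auto
      also have "\<dots> = (\<Sum>c<L*m. if c = (L-1-j)*m + e then v $ c else 0)"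
      proof (rule sum.cong[OF refl])
        fix c assume c: "c \<in> {..<L*m}"
        show "(Omega_mat L m * Xi_mat L m K ^\<^sub>m j) $$ (e,c) * v $ c = (if c = (L-1-j)*m + e then v $ c else 0)"
        proof (cases "c < (L-j)*m")
          case True
          then show ?thesis using OmXi_entry[of j L e m c K] Suc.prems e by simp
        next
          case False
          hence "v $ c = 0" using IH c by auto
          moreover have "c \<noteq> (L-1-j)*m + e"
          proof
            assume "c = (L-1-j)*m + e"
            moreover have "(L-1-j)*m + e < (L-j)*m"
              using idx_lt[of "L-1-j" "L-j" e m] e Suc.prems by simp
            ultimately show False using False by simp
          qed
          ultimately show ?thesis by simp
        qed
      qed
      also have "\<dots> = v $ ((L-1-j)*m + e)"
        using idx_lt[of "L-1-j" L e m] e Suc.prems by (simp add: sum.delta)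
      finally show ?thesis by simp
    qed
    show ?case
    proof (intro allI impI)
      fix c assume c1: "(L - Suc j)*m \<le> c" and c2: "c < L*m"
      show "v $ c = 0"
      proof (cases "(L-j)*m \<le> c")
        case True then show ?thesis using IH c2 by auto
      next
        case False
        moreover have "(L-j)*m = (L-1-j)*m + m"
        proof -
          have "L - j = Suc (L-1-j)" using Suc.prems by simp
          thus ?thesis by simp
        qed
        ultimately have "c < (L-1-j)*m + m" by simp
        hence "c - (L-1-j)*m < m" "c = (L-1-j)*m + (c - (L-1-j)*m)" using c1 by auto
        then show ?thesis using blk by metis
      qed
    qed
  qed
  have "\<forall>c. c < L*m \<longrightarrow> v $ c = 0" using step[of L] by simp
  thus ?thesis using v by (intro eq_vecI) auto
qed

lemma OK_inverse:
  "\<exists>Q. mat_inverse (obs_mat L (Omega_mat L m) (Xi_mat L m K)) = Some Q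
      \<and> obs_mat L (Omega_mat L m) (Xi_mat L m K) * Q = 1\<^sub>m (L*m) \<and> Q \<in> carrier_mat (L*m) (L*m)"
proof -
  let ?O = "obs_mat L (Omega_mat L m) (Xi_mat L m K)"
  have O: "?O \<in> carrier_mat (L*m) (L*m)" using obs_carrier[OF Omega_carrier] by auto
  have "det ?O \<noteq> 0" using det_0_iff_vec_prod_zero_field[OF O] OK_inj by blast
  from det_non_zero_imp_unit[OF O this, of undefined]
  have "mat_inverse ?O \<noteq> None" using mat_inverse(1)[OF O, of undefined] by auto
  then obtain Q where Q: "mat_inverse ?O = Some Q" by auto
  show ?thesis using Q mat_inverse(2)[OF O Q] by auto
qed

lemma Omega_mult: "w \<in> carrier_vec (L*m) \<Longrightarrow> f < m \<Longrightarrow> 0 < L \<Longrightarrow> (Omega_mat L m *\<^sub>v w) $ f = w $ ((L-1)*m + f)"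
proof -
  assume w: "w \<in> carrier_vec (L*m)" and f: "f < m" and L: "0 < L"
  have "(Omega_mat L m *\<^sub>v w) $ f = (\<Sum>c<L*m. Omega_mat L m $$ (f,c) * w $ c)"
    using Omega_carrier[of L m] w f by (intro mult_mat_vec_sum) auto
  also have "\<dots> = (\<Sum>c<L*m. if c = (L-1)*m + f then w $ c else 0)"
    using f by (intro sum.cong) (auto simp: Omega_mat_def)
  also have "\<dots> = w $ ((L-1)*m + f)"
    using idx_lt[of "L-1" L f m] L f by (simp add: sum.delta)
  finally show ?thesis .
qed

lemma xi_step:
  assumes L: "0 < L" and xi: "w \<in> carrier_vec (L*m)" and y: "yt \<in> carrier_vec r"
    and j: "j < L" and e: "e < m"
  shows "(Xi_mat L m K *\<^sub>v w + Lambda_mat L m r K *\<^sub>v yt) $ (j*m+e)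
     = (if 0 < j then w $ ((j-1)*m+e) else 0) + (\<Sum>f<m. K $$ (e, j*m+f) * w $ ((L-1)*m+f))
       + (\<Sum>g<r. K $$ (e, L*m + j*r + g) * yt $ g)"
proof -
  let ?a = "j*m+e"
  have a: "?a < L*m" using idx_lt[OF j e] .
  have adiv: "?a div m = j" "?a mod m = e" using e by auto
  have Lm: "L*m = (L-1)*m + m" using L by (cases L) auto
  have "(Xi_mat L m K *\<^sub>v w) $ ?a = (\<Sum>c<L*m. Xi_mat L m K $$ (?a,c) * w $ c)"
    using Xi_carrier xi a by (intro mult_mat_vec_sum) auto
  also have "\<dots> = (\<Sum>c<(L-1)*m. Xi_mat L m K $$ (?a,c) * w $ c)
      + (\<Sum>f<m. Xi_mat L m K $$ (?a,(L-1)*m+f) * w $ ((L-1)*m+f))"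
    unfolding Lm by (rule sum_split_add)
  also have "(\<Sum>c<(L-1)*m. Xi_mat L m K $$ (?a,c) * w $ c) = (\<Sum>c<(L-1)*m. if c = ?a - m \<and> m \<le> ?a then w $ c else 0)"
  proof (rule sum.cong[OF refl])
    fix c assume c: "c \<in> {..<(L-1)*m}"
    hence "c < L*m" using Lm by simp
    thus "Xi_mat L m K $$ (?a,c) * w $ c = (if c = ?a - m \<and> m \<le> ?a then w $ c else 0)"
      using c a by (auto simp: Xi_mat_def)
  qed
  also have "\<dots> = (if 0 < j then w $ ((j-1)*m+e) else 0)"
  proof (cases "0 < j")
    case True
    have "?a - m = (j-1)*m+e" using True by (cases j) auto
    moreover have "(j-1)*m+e < (L-1)*m" using idx_lt[of "j-1" "L-1" e m] True j e by simp
    moreover have "m \<le> ?a" using True by (cases j) auto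
    ultimately show ?thesis using True by (simp add: sum.delta)
  next
    case False
    hence "\<not> m \<le> ?a" using e by simp
    thus ?thesis using False by simp
  qed
  also have "(\<Sum>f<m. Xi_mat L m K $$ (?a,(L-1)*m+f) * w $ ((L-1)*m+f))
      = (\<Sum>f<m. K $$ (e, j*m+f) * w $ ((L-1)*m+f))"
  proof (rule sum.cong[OF refl])
    fix f assume f: "f \<in> {..<m}"
    have "(L-1)*m+f < L*m" using Lm f by simp
    moreover have "L - (L - j) = j" using j by simp
    ultimately show "Xi_mat L m K $$ (?a,(L-1)*m+f) * w $ ((L-1)*m+f) = K $$ (e, j*m+f) * w $ ((L-1)*m+f)"
      using a f adiv e by (simp add: Xi_mat_def K_A_def)
  qed
  finally have X: "(Xi_mat L m K *\<^sub>v w) $ ?a = (if 0 < j then w $ ((j-1)*m+e) else 0)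
      + (\<Sum>f<m. K $$ (e, j*m+f) * w $ ((L-1)*m+f))" .
  have "(Lambda_mat L m r K *\<^sub>v yt) $ ?a = (\<Sum>g<r. Lambda_mat L m r K $$ (?a,g) * yt $ g)"
    using Lambda_carrier y a by (intro mult_mat_vec_sum) auto
  also have "\<dots> = (\<Sum>g<r. K $$ (e, L*m + j*r + g) * yt $ g)"
  proof (rule sum.cong[OF refl])
    fix g assume g: "g \<in> {..<r}"
    have "L - (L - j) = j" using j by simp
    thus "Lambda_mat L m r K $$ (?a,g) * yt $ g = K $$ (e, L*m + j*r + g) * yt $ g"
      using a g adiv e by (simp add: Lambda_mat_def K_B_def)
  qed
  finally have Y: "(Lambda_mat L m r K *\<^sub>v yt) $ ?a = (\<Sum>g<r. K $$ (e, L*m + j*r + g) * yt $ g)" .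
  show ?thesis using X Y a Xi_carrier[of L m K] Lambda_carrier[of L m r K] by simp
qed

definition phi :: "real mat \<Rightarrow> nat \<Rightarrow> nat \<Rightarrow> nat \<Rightarrow> nat \<Rightarrow> real vec \<Rightarrow> real vec \<Rightarrow> nat \<Rightarrow> real" where
  "phi K L m r e ut yt i = (\<Sum>f<m. K $$ (e, i*m+f) * ut $ f) + (\<Sum>g<r. K $$ (e, L*m + i*r + g) * yt $ g)"

lemma arx:
  fixes \<xi> u y :: "nat \<Rightarrow> real vec"
  assumes L: "0 < L"
    and xi_c: "\<And>t. \<xi> t \<in> carrier_vec (L*m)"
    and y_c: "\<And>t. y t \<in> carrier_vec r"
    and \<xi>_dyn: "\<And>t. \<xi> (Suc t) = Xi_mat L m K *\<^sub>v \<xi> t + Lambda_mat L m r K *\<^sub>v y t"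
    and u_out: "\<And>t. u t = Omega_mat L m *\<^sub>v \<xi> t"
    and j: "j < L" and e: "e < m"
  shows "\<forall>t. j < t \<longrightarrow> \<xi> t $ (j*m+e) = (\<Sum>i<Suc j. phi K L m r e (u (t-1-i)) (y (t-1-i)) (j-i))"
  using j
proof (induct j)
  case 0
  show ?case
  proof (intro allI impI)
    fix t :: nat assume "0 < t"
    then obtain t' where t: "t = Suc t'" by (cases t) auto
    have "\<xi> t $ (0*m+e) = (\<Sum>f<m. K $$ (e, 0*m+f) * \<xi> t' $ ((L-1)*m+f)) + (\<Sum>g<r. K $$ (e, L*m + 0*r + g) * y t' $ g)"
      unfolding t \<xi>_dyn using xi_step[OF L xi_c y_c 0 e] by simp
    also have "\<dots> = phi K L m r e (u t') (y t') 0"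
      unfolding phi_def u_out using Omega_mult[OF xi_c _ L] by simp
    finally show "\<xi> t $ (0*m+e) = (\<Sum>i<Suc 0. phi K L m r e (u (t-1-i)) (y (t-1-i)) (0-i))"
      using t by simp
  qed
next
  case (Suc j)
  show ?case
  proof (intro allI impI)
    fix t :: nat assume tj: "Suc j < t"
    then obtain t' where t: "t = Suc t'" by (cases t) auto
    have "\<xi> t $ (Suc j*m+e) = \<xi> t' $ (j*m+e) + ((\<Sum>f<m. K $$ (e, Suc j*m+f) * \<xi> t' $ ((L-1)*m+f))
         + (\<Sum>g<r. K $$ (e, L*m + Suc j*r + g) * y t' $ g))"
      unfolding t \<xi>_dyn using xi_step[OF L xi_c y_c Suc.prems e] by (simp add: add.assoc)
    also have "\<xi> t' $ (j*m+e) = (\<Sum>i<Suc j. phi K L m r e (u (t'-1-i)) (y (t'-1-i)) (j-i))"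
      using Suc tj t by auto
    also have "(\<Sum>f<m. K $$ (e, Suc j*m+f) * \<xi> t' $ ((L-1)*m+f))
         + (\<Sum>g<r. K $$ (e, L*m + Suc j*r + g) * y t' $ g) = phi K L m r e (u t') (y t') (Suc j)"
      unfolding phi_def u_out using Omega_mult[OF xi_c _ L] by simp
    finally show "\<xi> t $ (Suc j*m+e) = (\<Sum>i<Suc (Suc j). phi K L m r e (u (t-1-i)) (y (t-1-i)) (Suc j-i))"
      unfolding sum.lessThan_Suc_shift using t by simp
  qed
qed


lemma ctrl_law:
  fixes \<xi> u y :: "nat \<Rightarrow> real vec"
  assumes L: "0 < L"
    and xi_c: "\<And>t. \<xi> t \<in> carrier_vec (L*m)"
    and y_c: "\<And>t. y t \<in> carrier_vec r"
    and K_dim: "K \<in> carrier_mat m (L * (m + r))"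
    and \<xi>_dyn: "\<And>t. \<xi> (Suc t) = Xi_mat L m K *\<^sub>v \<xi> t + Lambda_mat L m r K *\<^sub>v y t"
    and u_out: "\<And>t. u t = Omega_mat L m *\<^sub>v \<xi> t"
    and t: "L \<le> t"
  shows "u t = K *\<^sub>v ioh L m r u y t"
proof (rule eq_vecI)
  have u_c: "\<And>t. u t \<in> carrier_vec m" using u_out xi_c Omega_carrier[of L m] by auto
  fix e assume "e < dim_vec (K *\<^sub>v ioh L m r u y t)"
  hence e: "e < m" using K_dim by simp
  have "u t $ e = \<xi> t $ ((L-1)*m+e)" using Omega_mult[OF xi_c e L] u_out by simp
  also have "\<dots> = (\<Sum>i<Suc (L-1). phi K L m r e (u (t-1-i)) (y (t-1-i)) (L-1-i))"
  proof -
    have A: "\<forall>t. L-1 < t \<longrightarrow> \<xi> t $ ((L-1)*m+e) = (\<Sum>i<Suc (L-1). phi K L m r e (u (t-1-i)) (y (t-1-i)) (L-1-i))"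
      apply (rule arx)
            apply (rule L)
           apply (rule xi_c)
          apply (rule y_c)
         apply (rule \<xi>_dyn)
        apply (rule u_out)
       apply (use L in simp)
      apply (rule e)
      done
    have "L - 1 < t" using L t by simp
    thus ?thesis using A by blast
  qed
  also have "\<dots> = (\<Sum>i<L. phi K L m r e (u (t-1-i)) (y (t-1-i)) (L-1-i))" using L by simp
  also have "\<dots> = (\<Sum>l<L. phi K L m r e (u (t-L+l)) (y (t-L+l)) l)"
  proof -
    have "(\<Sum>l<L. phi K L m r e (u (t-L+l)) (y (t-L+l)) l)
        = (\<Sum>i<L. phi K L m r e (u (t-L+(L - Suc i))) (y (t-L+(L - Suc i))) (L - Suc i))"
      by (rule sum.nat_diff_reindex[symmetric])
    also have "\<dots> = (\<Sum>i<L. phi K L m r e (u (t-1-i)) (y (t-1-i)) (L-1-i))"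
    proof (rule sum.cong[OF refl])
      fix i assume "i \<in> {..<L}"
      hence e1: "t-L+(L - Suc i) = t-1-i" and e2: "L - Suc i = L-1-i" using t by auto
      show "phi K L m r e (u (t-L+(L - Suc i))) (y (t-L+(L - Suc i))) (L - Suc i)
          = phi K L m r e (u (t-1-i)) (y (t-1-i)) (L-1-i)" unfolding e1 unfolding e2 by (rule refl)
    qed
    finally show ?thesis by simp
  qed
  also have "\<dots> = (K *\<^sub>v ioh L m r u y t) $ e"
  proof -
    have V: "ioh L m r u y t \<in> carrier_vec (L*m + L*r)" by (simp add: ioh_def algebra_simps)
    have K': "K \<in> carrier_mat m (L*m + L*r)" using K_dim by (simp add: algebra_simps)
    have "(K *\<^sub>v ioh L m r u y t) $ e = (\<Sum>c<L*m+L*r. K $$ (e,c) * ioh L m r u y t $ c)"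
      by (rule mult_mat_vec_sum[OF K' V e])
    also have "\<dots> = (\<Sum>c<L*m. K $$ (e,c) * bv L m u (t-L) $ c) + (\<Sum>c<L*r. K $$ (e,L*m+c) * bv L r y (t-L) $ c)"
      unfolding sum_split_add ioh_split by (intro arg_cong2[where f="(+)"] sum.cong refl) auto
    also have "\<dots> = (\<Sum>l<L. \<Sum>f<m. K $$ (e,l*m+f) * u (t-L+l) $ f) + (\<Sum>l<L. \<Sum>g<r. K $$ (e,L*m+(l*r+g)) * y (t-L+l) $ g)"
    proof -
      have 1: "(\<Sum>c<L*m. K $$ (e,c) * bv L m u (t-L) $ c) = (\<Sum>l<L. \<Sum>f<m. K $$ (e,l*m+f) * u (t-L+l) $ f)"
        unfolding sum_blocks by (intro sum.cong refl) (simp add: bv_index)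
      have 2: "(\<Sum>c<L*r. K $$ (e,L*m+c) * bv L r y (t-L) $ c) = (\<Sum>l<L. \<Sum>g<r. K $$ (e,L*m+(l*r+g)) * y (t-L+l) $ g)"
        unfolding sum_blocks by (intro sum.cong refl) (simp add: bv_index)
      show ?thesis using 1 2 by simp
    qed
    also have "\<dots> = (\<Sum>l<L. phi K L m r e (u (t-L+l)) (y (t-L+l)) l)"
      unfolding phi_def sum.distrib by (simp add: add.assoc)
    finally show ?thesis by simp
  qed
  finally show "u t $ e = (K *\<^sub>v ioh L m r u y t) $ e" .
next
  show "dim_vec (u t) = dim_vec (K *\<^sub>v ioh L m r u y t)"
    using u_out xi_c Omega_carrier[of L m] K_dim by simp
qed


lemma blk_eq: "e < (k::nat) \<Longrightarrow> b < k \<Longrightarrow> (l*k+e = l'*k+b) = (l = l' \<and> e = b)"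
proof
  assume e: "e < k" and b: "b < k" and h: "l*k+e = l'*k+b"
  have "(l*k+e) div k = l" "(l'*k+b) div k = l'" "(l*k+e) mod k = e" "(l'*k+b) mod k = b" using e b by auto
  thus "l = l' \<and> e = b" using h by metis
qed auto

lemma shift_mult:
  assumes l: "l < L" and e: "e < k"
  shows "(shift_mat L k *\<^sub>v bv L k z t0) $ (l*k+e) = (if Suc l < L then z (t0 + Suc l) $ e else 0)"
proof -
  have a: "l*k+e < L*k" using idx_lt[OF l e] .
  have "(shift_mat L k *\<^sub>v bv L k z t0) $ (l*k+e) = (\<Sum>c<L*k. shift_mat L k $$ (l*k+e,c) * bv L k z t0 $ c)"
    using a by (intro mult_mat_vec_sum) (auto simp: shift_mat_def)
  also have "\<dots> = (\<Sum>c<L*k. if c = Suc l * k + e then bv L k z t0 $ c else 0)"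
    using a by (intro sum.cong refl) (auto simp: shift_mat_def)
  also have "\<dots> = (if Suc l * k + e < L*k then bv L k z t0 $ (Suc l * k + e) else 0)"
    by (simp add: sum.delta)
  also have "\<dots> = (if Suc l < L then z (t0 + Suc l) $ e else 0)"
  proof (cases "Suc l < L")
    case True
    then show ?thesis using idx_lt[OF True e] bv_index[OF True e] by simp
  next
    case False
    hence "L * k \<le> Suc l * k" by (intro mult_le_mono1) simp
    then show ?thesis using False by simp
  qed
  finally show ?thesis .
qed

lemma E_carrier: "E_mat L m r \<in> carrier_mat (L*(m+r)) r" by (simp add: E_mat_def)
lemma Pi_carrier: "Pi_mat L m r \<in> carrier_mat (L*(m+r)) m" by (simp add: Pi_mat_def)

lemma E_mult1:
  assumes L: "0 < L" and w: "w \<in> carrier_vec r" and a: "a < L*m"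
  shows "(E_mat L m r *\<^sub>v w) $ a = 0"
proof -
  have a': "a < L*(m+r)" using a by (simp add: algebra_simps)
  have "(E_mat L m r *\<^sub>v w) $ a = (\<Sum>b<r. E_mat L m r $$ (a,b) * w $ b)"
    using E_carrier w a' by (intro mult_mat_vec_sum) auto
  also have "\<dots> = 0"
  proof (intro sum.neutral ballI)
    fix b assume b: "b \<in> {..<r}"
    have "L*(m+r) - r = L*m + (L-1)*r" using L by (cases L) (auto simp: algebra_simps)
    hence "a \<noteq> L*(m+r) - r + b" using a by simp
    thus "E_mat L m r $$ (a,b) * w $ b = 0" using b a' by (simp add: E_mat_def)
  qed
  finally show ?thesis .
qed

lemma E_mult2:
  assumes L: "0 < L" and w: "w \<in> carrier_vec r" and l: "l < L" and e: "e < r"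
  shows "(E_mat L m r *\<^sub>v w) $ (L*m + (l*r+e)) = (if l = L-1 then w $ e else 0)"
proof -
  let ?a = "L*m + (l*r+e)"
  have a': "?a < L*(m+r)" using idx_lt[OF l e] by (simp add: algebra_simps)
  have N: "L*(m+r) - r = L*m + (L-1)*r" using L by (cases L) (auto simp: algebra_simps)
  have "(E_mat L m r *\<^sub>v w) $ ?a = (\<Sum>b<r. E_mat L m r $$ (?a,b) * w $ b)"
    using E_carrier w a' by (intro mult_mat_vec_sum) auto
  also have "\<dots> = (\<Sum>b<r. if l = L-1 \<and> b = e then w $ b else 0)"
  proof (intro sum.cong refl)
    fix b assume b: "b \<in> {..<r}"
    have "(?a = L*(m+r) - r + b) = (l = L-1 \<and> e = b)"
      unfolding N using blk_eq[OF e, of b l "L-1"] b by auto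
    thus "E_mat L m r $$ (?a,b) * w $ b = (if l = L-1 \<and> b = e then w $ b else 0)"
      using b a' by (auto simp: E_mat_def)
  qed
  also have "\<dots> = (if l = L-1 then w $ e else 0)"
    using e by (cases "l = L-1") (simp_all add: sum.delta)
  finally show ?thesis .
qed

lemma Pi_mult1:
  assumes w: "w \<in> carrier_vec m" and l: "l < L" and e: "e < m"
  shows "(Pi_mat L m r *\<^sub>v w) $ (l*m+e) = (if l = L-1 then w $ e else 0)"
proof -
  let ?a = "l*m+e"
  have a': "?a < L*(m+r)" using idx_lt[OF l e] by (simp add: algebra_simps)
  have "(Pi_mat L m r *\<^sub>v w) $ ?a = (\<Sum>b<m. Pi_mat L m r $$ (?a,b) * w $ b)"
    using Pi_carrier w a' by (intro mult_mat_vec_sum) auto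
  also have "\<dots> = (\<Sum>b<m. if l = L-1 \<and> b = e then w $ b else 0)"
  proof (intro sum.cong refl)
    fix b assume b: "b \<in> {..<m}"
    have "(?a = (L-1)*m + b) = (l = L-1 \<and> e = b)"
      using blk_eq[OF e, of b l "L-1"] b by auto
    thus "Pi_mat L m r $$ (?a,b) * w $ b = (if l = L-1 \<and> b = e then w $ b else 0)"
      using b a' by (auto simp: Pi_mat_def)
  qed
  also have "\<dots> = (if l = L-1 then w $ e else 0)"
    using e by (cases "l = L-1") (simp_all add: sum.delta)
  finally show ?thesis .
qed

lemma Pi_mult2:
  assumes L: "0 < L" and w: "w \<in> carrier_vec m" and a: "L*m \<le> a" "a < L*(m+r)"
  shows "(Pi_mat L m r *\<^sub>v w) $ a = 0"
proof -
  have "(Pi_mat L m r *\<^sub>v w) $ a = (\<Sum>b<m. Pi_mat L m r $$ (a,b) * w $ b)"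
    using Pi_carrier w a by (intro mult_mat_vec_sum) auto
  also have "\<dots> = 0"
  proof (intro sum.neutral ballI)
    fix b assume b: "b \<in> {..<m}"
    have "(L-1)*m + b < L*m" using idx_lt[of "L-1" L b m] L b by simp
    hence "a \<noteq> (L-1)*m + b" using a by simp
    thus "Pi_mat L m r $$ (a,b) * w $ b = 0" using b a by (simp add: Pi_mat_def)
  qed
  finally show ?thesis .
qed


lemma Gamma_carrier:
  assumes A: "A \<in> carrier_mat n n" and B: "B \<in> carrier_mat n m" and C: "C \<in> carrier_mat r n"
    and P: "pinv (obs_mat L C A) \<in> carrier_mat n (L*r)"
  shows "Gamma_mat L A B C \<in> carrier_mat n (L*m + L*r)"
  using A B C P reach_carrier[OF B, of L A] toep_carrier[OF B C, of L A]
  by (simp add: Gamma_mat_def hcat_def)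

lemma Gamma_state:
  fixes x u y :: "nat \<Rightarrow> real vec"
  assumes A: "A \<in> carrier_mat n n" and B: "B \<in> carrier_mat n m" and C: "C \<in> carrier_mat r n"
    and PO: "pinv (obs_mat L C A) * obs_mat L C A = 1\<^sub>m n"
    and P: "pinv (obs_mat L C A) \<in> carrier_mat n (L*r)"
    and x0: "x t0 \<in> carrier_vec n"
    and u_c: "\<And>s. s < L \<Longrightarrow> u (t0+s) \<in> carrier_vec m"
    and dyn: "\<And>s. s < L \<Longrightarrow> x (Suc (t0+s)) = A *\<^sub>v x (t0+s) + B *\<^sub>v u (t0+s)"
    and y_out: "\<And>s. s < L \<Longrightarrow> y (t0+s) = C *\<^sub>v x (t0+s)"
  shows "Gamma_mat L A B C *\<^sub>v (bv L m u t0 @\<^sub>v bv L r y t0) = x (t0 + L)"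
proof -
  let ?O = "obs_mat L C A" and ?T = "toep_mat L A B C" and ?R = "reach_mat L A B"
  let ?P = "pinv (obs_mat L C A)" and ?AL = "A ^\<^sub>m L"
  let ?up = "bv L m u t0" and ?yp = "bv L r y t0"
  have O: "?O \<in> carrier_mat (L*r) n" by (rule obs_carrier[OF C])
  have T: "?T \<in> carrier_mat (L*r) (L*m)" by (rule toep_carrier[OF B C])
  have R: "?R \<in> carrier_mat n (L*m)" by (rule reach_carrier[OF B])
  have AL: "?AL \<in> carrier_mat n n" using A by simp
  have DF: "x (t0+k) \<in> carrier_vec n \<and> (\<forall>M h b. M \<in> carrier_mat h n \<longrightarrow> b < h \<longrightarrow>
     (M *\<^sub>v x (t0+k)) $ b = (M * A ^\<^sub>m k *\<^sub>v x t0) $ b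
        + (\<Sum>l<k. (M * A ^\<^sub>m (k-1-l) * B *\<^sub>v u (t0+l)) $ b))" if "k \<le> L" for k
    by (rule dyn_formula[where z=x and ?t0.0=t0 and w=u and k=k, OF A B x0]) (use that u_c dyn in auto)
  have yp: "?yp = ?O *\<^sub>v x t0 + ?T *\<^sub>v ?up"
  proof (rule eq_vecI)
    fix i assume "i < dim_vec (?O *\<^sub>v x t0 + ?T *\<^sub>v ?up)"
    hence i: "i < L*r" using O T by simp
    have r: "0 < r" using i by (cases r) auto
    have j: "i div r < L" using i by (simp add: less_mult_imp_div_less)
    have b: "i mod r < r" using r by simp
    have "?yp $ i = y (t0 + i div r) $ (i mod r)" using i by (simp add: bv_def)
    also have "\<dots> = (C *\<^sub>v x (t0 + i div r)) $ (i mod r)" using y_out j by simp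
    also have "\<dots> = (C * A ^\<^sub>m (i div r) *\<^sub>v x t0) $ (i mod r)
        + (\<Sum>l<i div r. (C * A ^\<^sub>m (i div r-1-l) * B *\<^sub>v u (t0+l)) $ (i mod r))"
      using DF[of "i div r"] j C b by simp
    also have "\<dots> = (?O *\<^sub>v x t0) $ i + (?T *\<^sub>v ?up) $ i"
      using obs_mult[OF C A x0 i] toep_mult[OF A B C _ i, of u t0] u_c by simp
    also have "\<dots> = (?O *\<^sub>v x t0 + ?T *\<^sub>v ?up) $ i" using O T i by simp
    finally show "?yp $ i = (?O *\<^sub>v x t0 + ?T *\<^sub>v ?up) $ i" .
  qed (use O T in simp)
  have xL: "x (t0+L) = ?AL *\<^sub>v x t0 + ?R *\<^sub>v ?up"
  proof (rule eq_vecI)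
    have xc: "x (t0+L) \<in> carrier_vec n" using DF[of L] by simp
    have H: "\<And>M h b. M \<in> carrier_mat h n \<Longrightarrow> b < h \<Longrightarrow> (M *\<^sub>v x (t0+L)) $ b = (M * A ^\<^sub>m L *\<^sub>v x t0) $ b
        + (\<Sum>l<L. (M * A ^\<^sub>m (L-1-l) * B *\<^sub>v u (t0+l)) $ b)" using DF[of L] by blast
    fix i assume "i < dim_vec (?AL *\<^sub>v x t0 + ?R *\<^sub>v ?up)"
    hence i: "i < n" using AL R by simp
    have "x (t0+L) $ i = (1\<^sub>m n *\<^sub>v x (t0+L)) $ i" using xc by simp
    also have "\<dots> = (1\<^sub>m n * ?AL *\<^sub>v x t0) $ i + (\<Sum>l<L. (1\<^sub>m n * A ^\<^sub>m (L-1-l) * B *\<^sub>v u (t0+l)) $ i)"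
      by (rule H[OF one_carrier_mat i])
    also have "\<dots> = (?AL *\<^sub>v x t0) $ i + (\<Sum>l<L. (A ^\<^sub>m (L-1-l) * B *\<^sub>v u (t0+l)) $ i)"
      using A B by simp
    also have "\<dots> = (?AL *\<^sub>v x t0) $ i + (?R *\<^sub>v ?up) $ i"
      using reach_mult[OF A B _ i, of L u t0] u_c by simp
    also have "\<dots> = (?AL *\<^sub>v x t0 + ?R *\<^sub>v ?up) $ i" using AL R i by simp
    finally show "x (t0+L) $ i = (?AL *\<^sub>v x t0 + ?R *\<^sub>v ?up) $ i" .
  qed (use AL R DF[of L] in simp)
  have M1: "?R - ?AL * ?P * ?T \<in> carrier_mat n (L*m)"
    by (rule minus_carrier_mat, rule mult_carrier_mat[OF mult_carrier_mat[OF AL P] T])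
  have M2: "?AL * ?P \<in> carrier_mat n (L*r)" using AL P by simp
  have "Gamma_mat L A B C *\<^sub>v (?up @\<^sub>v ?yp) = (?R - ?AL * ?P * ?T) *\<^sub>v ?up + (?AL * ?P) *\<^sub>v ?yp"
    unfolding Gamma_mat_def by (rule hcat_mult[OF M1 M2]) auto
  also have "(?R - ?AL * ?P * ?T) *\<^sub>v ?up = ?R *\<^sub>v ?up - ?AL *\<^sub>v (?P *\<^sub>v (?T *\<^sub>v ?up))"
    using R AL P T by (simp add: minus_mult_distrib_mat_vec[of _ n "L*m"] assoc_mult_mat_vec[of _ n n _ "L*m"]
        assoc_mult_mat_vec[of _ n "L*r" _ "L*m"])
  also have "(?AL * ?P) *\<^sub>v ?yp = ?AL *\<^sub>v x t0 + ?AL *\<^sub>v (?P *\<^sub>v (?T *\<^sub>v ?up))"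
  proof -
    have "(?AL * ?P) *\<^sub>v ?yp = ?AL *\<^sub>v (?P *\<^sub>v (?O *\<^sub>v x t0) + ?P *\<^sub>v (?T *\<^sub>v ?up))"
      unfolding yp using AL P O T x0 by (simp add: mult_add_distrib_mat_vec[of _ n "L*r"] mult_add_distrib_mat_vec[of _ n n])
    also have "?P *\<^sub>v (?O *\<^sub>v x t0) = x t0"
      using P O x0 PO by (simp flip: assoc_mult_mat_vec[of _ n "L*r" _ n])
    finally show ?thesis using AL P T x0 by (simp add: mult_add_distrib_mat_vec[of _ n n])
  qed
  also have "?R *\<^sub>v ?up - ?AL *\<^sub>v (?P *\<^sub>v (?T *\<^sub>v ?up)) + (?AL *\<^sub>v x t0 + ?AL *\<^sub>v (?P *\<^sub>v (?T *\<^sub>v ?up)))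
     = ?AL *\<^sub>v x t0 + ?R *\<^sub>v ?up"
    using R AL P T x0 by (intro eq_vecI) auto
  finally show ?thesis using xL by simp
qed


lemma ioh_shift:
  fixes u y :: "nat \<Rightarrow> real vec"
  assumes L: "0 < L" and A: "A \<in> carrier_mat n n" and B: "B \<in> carrier_mat n m" and C: "C \<in> carrier_mat r n"
    and P: "pinv (obs_mat L C A) \<in> carrier_mat n (L*r)"
    and t: "L \<le> t" and u_c: "\<And>\<tau>. u \<tau> \<in> carrier_vec m" and y_c: "\<And>\<tau>. y \<tau> \<in> carrier_vec r"
    and yt: "(C * Gamma_mat L A B C) *\<^sub>v ioh L m r u y t = y t"
  shows "Theta_mat L A B C *\<^sub>v ioh L m r u y t + Pi_mat L m r *\<^sub>v u t = ioh L m r u y (Suc t)"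
proof -
  let ?up = "bv L m u (t-L)" and ?yp = "bv L r y (t-L)"
  let ?V = "ioh L m r u y t" and ?G = "Gamma_mat L A B C"
  let ?Sm = "shift_mat L m" and ?Sr = "shift_mat L r"
  let ?FB = "four_block_mat ?Sm (0\<^sub>m (L * m) (L * r)) (0\<^sub>m (L * r) (L * m)) ?Sr"
  let ?W = "(?Sm *\<^sub>v ?up + 0\<^sub>m (L * m) (L * r) *\<^sub>v ?yp) @\<^sub>v (0\<^sub>m (L * r) (L * m) *\<^sub>v ?up + ?Sr *\<^sub>v ?yp)"
  have LN: "L*(m+r) = L*m + L*r" by (simp add: algebra_simps)
  have V: "?V = ?up @\<^sub>v ?yp" by (rule ioh_split)
  have Vc: "?V \<in> carrier_vec (L*m + L*r)" unfolding V by simp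
  have Sm: "?Sm \<in> carrier_mat (L*m) (L*m)" by (simp add: shift_mat_def)
  have Sr: "?Sr \<in> carrier_mat (L*r) (L*r)" by (simp add: shift_mat_def)
  have FB: "?FB \<in> carrier_mat (L*m + L*r) (L*m + L*r)" using Sm Sr by simp
  have G: "?G \<in> carrier_mat n (L*m + L*r)" by (rule Gamma_carrier[OF A B C P])
  have E: "E_mat L m r \<in> carrier_mat (L*m + L*r) r" using E_carrier[of L m r] unfolding LN .
  have EC: "E_mat L m r * C \<in> carrier_mat (L*m + L*r) n" using E C by simp
  have ECG: "E_mat L m r * C * ?G \<in> carrier_mat (L*m + L*r) (L*m + L*r)" using EC G by simp
  have Th: "Theta_mat L A B C = ?FB + E_mat L m r * C * ?G"
    using B C by (simp add: Theta_mat_def)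
  have "Theta_mat L A B C *\<^sub>v ?V = ?FB *\<^sub>v ?V + (E_mat L m r * C * ?G) *\<^sub>v ?V"
    unfolding Th by (rule add_mult_distrib_mat_vec[OF FB ECG Vc])
  also have "?FB *\<^sub>v ?V = ?W"
    unfolding V by (rule four_block_mat_mult_vec[OF Sm _ _ Sr]) auto
  also have "(E_mat L m r * C * ?G) *\<^sub>v ?V = E_mat L m r *\<^sub>v y t"
  proof -
    have "(E_mat L m r * C * ?G) *\<^sub>v ?V = (E_mat L m r * C) *\<^sub>v (?G *\<^sub>v ?V)"
      by (rule assoc_mult_mat_vec[OF EC G Vc])
    also have "\<dots> = E_mat L m r *\<^sub>v (C *\<^sub>v (?G *\<^sub>v ?V))"
      using E C G Vc by (intro assoc_mult_mat_vec) auto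
    also have "C *\<^sub>v (?G *\<^sub>v ?V) = y t" using yt C G Vc by simp
    finally show ?thesis .
  qed
  finally have TH: "Theta_mat L A B C *\<^sub>v ?V = ?W
      + E_mat L m r *\<^sub>v y t" .
  have V1: "ioh L m r u y (Suc t) = bv L m u (Suc t - L) @\<^sub>v bv L r y (Suc t - L)" by (rule ioh_split)
  show ?thesis
  proof (rule eq_vecI)
    fix a assume "a < dim_vec (ioh L m r u y (Suc t))"
    hence a: "a < L*m + L*r" by (simp add: ioh_def LN)
    have Pc: "Pi_mat L m r \<in> carrier_mat (L*m + L*r) m" using Pi_carrier[of L m r] unfolding LN .
    have lhs: "(Theta_mat L A B C *\<^sub>v ?V + Pi_mat L m r *\<^sub>v u t) $ a
      = ((?Sm *\<^sub>v ?up + 0\<^sub>m (L * m) (L * r) *\<^sub>v ?yp) @\<^sub>v (0\<^sub>m (L * r) (L * m) *\<^sub>v ?up + ?Sr *\<^sub>v ?yp)) $ a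
        + (E_mat L m r *\<^sub>v y t) $ a + (Pi_mat L m r *\<^sub>v u t) $ a"
      unfolding TH using a Sm Sr E Pc by simp
    show "(Theta_mat L A B C *\<^sub>v ?V + Pi_mat L m r *\<^sub>v u t) $ a = ioh L m r u y (Suc t) $ a"
    proof (cases "a < L*m")
      case True
      have m: "0 < m" using True by (cases m) auto
      define l where "l = a div m"
      define e where "e = a mod m"
      have ae: "a = l*m+e" unfolding l_def e_def by simp
      have l: "l < L" unfolding l_def using True by (simp add: less_mult_imp_div_less)
      have e: "e < m" unfolding e_def using m by simp
      have "(Theta_mat L A B C *\<^sub>v ?V + Pi_mat L m r *\<^sub>v u t) $ a
          = (?Sm *\<^sub>v ?up) $ (l*m+e) + (Pi_mat L m r *\<^sub>v u t) $ (l*m+e)"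
        unfolding lhs using True E_mult1[OF L y_c True] Sm ae by simp
      also have "\<dots> = (if Suc l < L then u (t - L + Suc l) $ e else 0) + (if l = L-1 then u t $ e else 0)"
        using shift_mult[OF l e] Pi_mult1[OF u_c l e] by simp
      also have "\<dots> = u (Suc t - L + l) $ e"
      proof (cases "Suc l < L")
        case True
        hence neq: "l \<noteq> L-1" by simp
        have eq: "t - L + Suc l = Suc t - L + l" using t by simp
        have "(if Suc l < L then u (t - L + Suc l) $ e else 0) + (if l = L-1 then u t $ e else 0) = u (t - L + Suc l) $ e"
          using True neq by simp
        also have "u (t - L + Suc l) $ e = u (Suc t - L + l) $ e" by (simp only: eq)
        finally show ?thesis .
      next
        case False
        hence leq: "l = L-1" using l by simp
        have eq: "Suc t - L + l = t" using t L leq by simp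
        have "(if Suc l < L then u (t - L + Suc l) $ e else 0) + (if l = L-1 then u t $ e else 0) = u t $ e"
          using False leq by simp
        also have "u t $ e = u (Suc t - L + l) $ e" by (simp only: eq)
        finally show ?thesis .
      qed
      also have "\<dots> = ioh L m r u y (Suc t) $ a"
        unfolding V1 using True ae bv_index[OF l e] by simp
      finally show ?thesis .
    next
      case False
      have r: "0 < r" using False a by (cases r) auto
      define l where "l = (a - L*m) div r"
      define e where "e = (a - L*m) mod r"
      have ae: "a = L*m + (l*r+e)" unfolding l_def e_def using False by simp
      have l: "l < L" unfolding l_def using False a by (simp add: less_mult_imp_div_less)
      have e: "e < r" unfolding e_def using r by simp
      have "(Theta_mat L A B C *\<^sub>v ?V + Pi_mat L m r *\<^sub>v u t) $ a
          = (?Sr *\<^sub>v ?yp) $ (l*r+e) + (E_mat L m r *\<^sub>v y t) $ (L*m + (l*r+e))"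
      proof -
        have "(Pi_mat L m r *\<^sub>v u t) $ a = 0" using Pi_mult2[OF L u_c, of a] False a LN by simp
        moreover have "((?Sm *\<^sub>v ?up + 0\<^sub>m (L * m) (L * r) *\<^sub>v ?yp) @\<^sub>v (0\<^sub>m (L * r) (L * m) *\<^sub>v ?up + ?Sr *\<^sub>v ?yp)) $ a
            = (?Sr *\<^sub>v ?yp) $ (l*r+e)"
          using False a Sm Sr ae idx_lt[OF l e] by simp
        ultimately show ?thesis unfolding lhs using ae by simp
      qed
      also have "\<dots> = (if Suc l < L then y (t - L + Suc l) $ e else 0) + (if l = L-1 then y t $ e else 0)"
        using shift_mult[OF l e] E_mult2[OF L y_c l e] by simp
      also have "\<dots> = y (Suc t - L + l) $ e"
      proof (cases "Suc l < L")
        case True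
        hence neq: "l \<noteq> L-1" by simp
        have eq: "t - L + Suc l = Suc t - L + l" using t by simp
        have "(if Suc l < L then y (t - L + Suc l) $ e else 0) + (if l = L-1 then y t $ e else 0) = y (t - L + Suc l) $ e"
          using True neq by simp
        also have "y (t - L + Suc l) $ e = y (Suc t - L + l) $ e" by (simp only: eq)
        finally show ?thesis .
      next
        case False
        hence leq: "l = L-1" using l by simp
        have eq: "Suc t - L + l = t" using t L leq by simp
        have "(if Suc l < L then y (t - L + Suc l) $ e else 0) + (if l = L-1 then y t $ e else 0) = y t $ e"
          using False leq by simp
        also have "y t $ e = y (Suc t - L + l) $ e" by (simp only: eq)
        finally show ?thesis .
      qed
      also have "\<dots> = ioh L m r u y (Suc t) $ a"
        unfolding V1 using False ae bv_index[OF l e] idx_lt[OF l e] by simp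
      finally show ?thesis .
    qed
  next
    show "dim_vec (Theta_mat L A B C *\<^sub>v ?V + Pi_mat L m r *\<^sub>v u t) = dim_vec (ioh L m r u y (Suc t))"
      using Pi_carrier[of L m r] u_c by (simp add: ioh_def)
  qed
qed


theorem lemma2:
  fixes A B C K :: "real mat" and n m r L :: nat
    and xd ud yd :: "nat \<Rightarrow> real vec"
    and x \<xi> u y :: "nat \<Rightarrow> real vec"
    and vI uI yI :: "nat \<Rightarrow> real vec"
  assumes dims: "A \<in> carrier_mat n n" "B \<in> carrier_mat n m" "C \<in> carrier_mat r n"
    and minimal: "minimal_sys A B C"
    and stable: "schur A"
    and L_pos: "0 < L"
    and rankO: "rank_mat (obs_mat L C A) = n"
    and K_dim: "K \<in> carrier_mat m (L * (m + r))"
    \<comment> \<open>past data of \<Sigma>_s on [0, L), with arbitrary inputs, generating the IOH v(L)\<close>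
    and xd0: "xd 0 \<in> carrier_vec n"
    and ud_dim: "\<And>t. t < L \<Longrightarrow> ud t \<in> carrier_vec m"
    and xd_dyn: "\<And>t. t < L \<Longrightarrow> xd (Suc t) = A *\<^sub>v xd t + B *\<^sub>v ud t"
    and yd_out: "\<And>t. t < L \<Longrightarrow> yd t = C *\<^sub>v xd t"
    \<comment> \<open>feedback interconnection of \<Sigma>_s and K_s\<close>
    and x0: "x 0 = xd 0"
    and x_dyn: "\<And>t. x (Suc t) = A *\<^sub>v x t + B *\<^sub>v u t"
    and y_out: "\<And>t. y t = C *\<^sub>v x t"
    and \<xi>_dyn: "\<And>t. \<xi> (Suc t) = Xi_mat L m K *\<^sub>v \<xi> t + Lambda_mat L m r K *\<^sub>v y t"
    and u_out: "\<And>t. u t = Omega_mat L m *\<^sub>v \<xi> t"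
    and \<xi>0: "\<xi> 0 = the (mat_inverse (obs_mat L (Omega_mat L m) (Xi_mat L m K)))
                   *\<^sub>v (hcat (1\<^sub>m (L * m))
                        (- toep_mat L (Xi_mat L m K) (Lambda_mat L m r K) (Omega_mat L m))
                      *\<^sub>v ioh L m r ud yd L)"
    \<comment> \<open>closed loop of the IOH system with the IOH feedback u = K v\<close>
    and vI0: "vI L = ioh L m r ud yd L"
    and vI_dyn: "\<And>t. L \<le> t \<Longrightarrow> vI (Suc t) = Theta_mat L A B C *\<^sub>v vI t + Pi_mat L m r *\<^sub>v uI t"
    and yI_out: "\<And>t. L \<le> t \<Longrightarrow> yI t = (C * Gamma_mat L A B C) *\<^sub>v vI t"
    and uI_fb: "\<And>t. L \<le> t \<Longrightarrow> uI t = K *\<^sub>v vI t"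
  shows "\<forall>t \<ge> L. uI t = u t \<and> yI t = y t"
proof -
  let ?O = "obs_mat L C A"
  let ?Xi = "Xi_mat L m K" and ?La = "Lambda_mat L m r K" and ?Om = "Omega_mat L m"
  let ?OK = "obs_mat L ?Om ?Xi" and ?TK = "toep_mat L ?Xi ?La ?Om"
  have A: "A \<in> carrier_mat n n" and B: "B \<in> carrier_mat n m" and C: "C \<in> carrier_mat r n" using dims by auto
  have PP: "pinv ?O * ?O = 1\<^sub>m n \<and> pinv ?O \<in> carrier_mat n (L*r)"
    by (rule pinv_left[OF obs_carrier[OF C] rankO])
  hence PO: "pinv ?O * ?O = 1\<^sub>m n" and P: "pinv ?O \<in> carrier_mat n (L*r)" by auto
  obtain Q where Qi: "mat_inverse ?OK = Some Q" and OKQ: "?OK * Q = 1\<^sub>m (L*m)" and Q: "Q \<in> carrier_mat (L*m) (L*m)"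
    using OK_inverse[of L m K] by blast
  have OK: "?OK \<in> carrier_mat (L*m) (L*m)" using obs_carrier[OF Omega_carrier[of L m]] .
  have TK: "?TK \<in> carrier_mat (L*m) (L*r)" using toep_carrier[OF Lambda_carrier Omega_carrier] .
  let ?udp = "bv L m ud 0" and ?ydp = "bv L r yd 0"
  have iohd: "ioh L m r ud yd L = ?udp @\<^sub>v ?ydp" using ioh_split[of L m r ud yd L] by simp
  define w where "w = ?udp + - (?TK *\<^sub>v ?ydp)"
  have wc: "w \<in> carrier_vec (L*m)" unfolding w_def using TK by simp
  have hc: "hcat (1\<^sub>m (L * m)) (- ?TK) *\<^sub>v ioh L m r ud yd L = w"
    unfolding iohd w_def using TK by (subst hcat_mult[of _ "L*m" "L*m" _ "L*r"]) auto
  have xi0: "\<xi> 0 = Q *\<^sub>v w" using \<xi>0 unfolding Qi hc by simp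
  have OKxi0: "?OK *\<^sub>v \<xi> 0 = w" unfolding xi0 using OK Q wc OKQ
    by (simp flip: assoc_mult_mat_vec[of _ "L*m" "L*m" _ "L*m"])
  have xi_c: "\<xi> t \<in> carrier_vec (L*m)" for t
  proof (induct t)
    case 0 show ?case unfolding xi0 by (rule mult_mat_vec_carrier[OF Q wc])
  next
    case (Suc t)
    have yc: "y t \<in> carrier_vec r" unfolding y_out carrier_vec_def using C by simp
    show ?case unfolding \<xi>_dyn
      by (rule add_carrier_vec[OF mult_mat_vec_carrier[OF Xi_carrier Suc] mult_mat_vec_carrier[OF Lambda_carrier yc]])
  qed
  have u_c: "u t \<in> carrier_vec m" for t unfolding u_out by (rule mult_mat_vec_carrier[OF Omega_carrier xi_c])
  have x_c: "x t \<in> carrier_vec n" for t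
  proof (induct t)
    case 0 then show ?case using x0 xd0 by simp
  next
    case (Suc t) then show ?case using x_dyn[of t] A B u_c by simp
  qed
  have y_c: "y t \<in> carrier_vec r" for t using y_out x_c C by simp
  \<comment> \<open>the interconnection reproduces the past data\<close>
  have xeq: "\<forall>s\<le>t. x s = xd s" if "\<forall>s<t. u s = ud s" "t \<le> L" for t
    using that
  proof (induct t)
    case 0 then show ?case using x0 by simp
  next
    case (Suc t)
    have IH: "\<forall>s\<le>t. x s = xd s" using Suc by auto
    have "x (Suc t) = xd (Suc t)" using x_dyn[of t] xd_dyn[of t] IH Suc.prems by simp
    then show ?case using IH le_Suc_eq by auto
  qed
  have past: "\<forall>s<t. u s = ud s" if "t \<le> L" for t
    using that
  proof (induct t)
    case 0 then show ?case by simp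
  next
    case (Suc t)
    have IH: "\<forall>s<t. u s = ud s" using Suc by auto
    have tL: "t < L" using Suc.prems by simp
    have xs: "\<forall>s\<le>t. x s = xd s" using xeq[OF IH] tL by simp
    have ys: "y s = yd s" if "s < t" for s using xs that y_out yd_out tL by simp
    have "u t = ud t"
    proof (rule eq_vecI)
      fix e assume "e < dim_vec (ud t)"
      hence e: "e < m" using ud_dim[OF tL] by simp
      let ?i = "t*m+e"
      have i: "?i < L*m" using idx_lt[OF tL e] .
      have idiv: "?i div m = t" "?i mod m = e" using e by auto
      have DF: "\<xi> (0+t) \<in> carrier_vec (L*m) \<and> (\<forall>M h b. M \<in> carrier_mat h (L*m) \<longrightarrow> b < h \<longrightarrow>
         (M *\<^sub>v \<xi> (0+t)) $ b = (M * ?Xi ^\<^sub>m t *\<^sub>v \<xi> 0) $ b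
            + (\<Sum>l<t. (M * ?Xi ^\<^sub>m (t-1-l) * ?La *\<^sub>v y (0+l)) $ b))"
        by (rule dyn_formula[where z=\<xi> and ?t0.0=0 and w=y and k=t, OF Xi_carrier Lambda_carrier xi_c])
          (use y_c \<xi>_dyn in auto)
      have H: "\<And>M h b. M \<in> carrier_mat h (L*m) \<Longrightarrow> b < h \<Longrightarrow> (M *\<^sub>v \<xi> t) $ b = (M * ?Xi ^\<^sub>m t *\<^sub>v \<xi> 0) $ b
            + (\<Sum>l<t. (M * ?Xi ^\<^sub>m (t-1-l) * ?La *\<^sub>v y l) $ b)" using DF by simp
      have "u t $ e = (?Om *\<^sub>v \<xi> t) $ e" using u_out by simp
      also have "\<dots> = (?Om * ?Xi ^\<^sub>m t *\<^sub>v \<xi> 0) $ e + (\<Sum>l<t. (?Om * ?Xi ^\<^sub>m (t-1-l) * ?La *\<^sub>v y l) $ e)"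
        by (rule H[OF Omega_carrier e])
      also have "(\<Sum>l<t. (?Om * ?Xi ^\<^sub>m (t-1-l) * ?La *\<^sub>v y l) $ e)
          = (\<Sum>l<t. (?Om * ?Xi ^\<^sub>m (t-1-l) * ?La *\<^sub>v yd l) $ e)"
        using ys by (intro sum.cong refl) simp
      also have "\<dots> = (?TK *\<^sub>v ?ydp) $ ?i"
      proof -
        have ydc: "yd (0+l) \<in> carrier_vec r" if "l < L" for l
          unfolding carrier_vec_def using yd_out[OF that] C by simp
        show ?thesis
          using toep_mult[where A="?Xi" and B="?La" and C="?Om" and n="L*m" and m=r and r=m and u=yd
            and ?t0.0=0 and i="?i" and L=L, OF Xi_carrier Lambda_carrier Omega_carrier ydc i] idiv
          by simp
      qed
      also have "(?Om * ?Xi ^\<^sub>m t *\<^sub>v \<xi> 0) $ e = (?OK *\<^sub>v \<xi> 0) $ ?i"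
        using obs_mult[OF Omega_carrier Xi_carrier xi_c i] idiv by simp
      also have "\<dots> = w $ ?i" using OKxi0 by simp
      also have "w $ ?i + (?TK *\<^sub>v ?ydp) $ ?i = ?udp $ ?i"
        unfolding w_def using i TK by simp
      also have "\<dots> = ud t $ e" using bv_index[OF tL e, of ud 0] by simp
      finally show "u t $ e = ud t $ e" .
    next
      show "dim_vec (u t) = dim_vec (ud t)" using u_c[of t] ud_dim[OF tL] by simp
    qed
    then show ?case using IH less_Suc_eq by auto
  qed
  have uL: "\<forall>s<L. u s = ud s" using past[of L] by simp
  have xL: "\<forall>s\<le>L. x s = xd s" using xeq[OF uL] by simp
  have yL: "\<forall>s<L. y s = yd s" using xL y_out yd_out by simp
  have yG: "(C * Gamma_mat L A B C) *\<^sub>v ioh L m r u y t = y t" if t: "L \<le> t" for t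
  proof -
    have G: "Gamma_mat L A B C \<in> carrier_mat n (L*m + L*r)" by (rule Gamma_carrier[OF A B C P])
    have "Gamma_mat L A B C *\<^sub>v (bv L m u (t-L) @\<^sub>v bv L r y (t-L)) = x (t - L + L)"
      by (rule Gamma_state[OF A B C PO P x_c]) (use u_c x_dyn y_out in auto)
    hence "Gamma_mat L A B C *\<^sub>v ioh L m r u y t = x t" using t ioh_split[of L m r u y t] by simp
    moreover have Vc: "ioh L m r u y t \<in> carrier_vec (L*m + L*r)" by (simp add: ioh_def algebra_simps)
    ultimately show ?thesis using assoc_mult_mat_vec[OF C G Vc] y_out[of t] by simp
  qed
  have ctrl: "u t = K *\<^sub>v ioh L m r u y t" if "L \<le> t" for t
    by (rule ctrl_law[where \<xi>=\<xi> and u=u and y=y and L=L and m=m and r=r and K=K and t=t, OF L_pos xi_c y_c K_dim \<xi>_dyn u_out that])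
  have shift: "Theta_mat L A B C *\<^sub>v ioh L m r u y t + Pi_mat L m r *\<^sub>v u t = ioh L m r u y (Suc t)"
    if "L \<le> t" for t
    by (rule ioh_shift[where u=u and y=y and t=t, OF L_pos A B C P that u_c y_c yG[OF that]])
  have baseL: "vI L = ioh L m r u y L"
  proof -
    have "ioh L m r ud yd L = ioh L m r u y L"
    proof (rule eq_vecI)
      fix a assume a: "a < dim_vec (ioh L m r u y L)"
      hence a': "a < L*m + L*r" by (simp add: ioh_def algebra_simps)
      show "ioh L m r ud yd L $ a = ioh L m r u y L $ a"
      proof (cases "a < L*m")
        case True
        hence "a div m < L" by (simp add: less_mult_imp_div_less)
        then show ?thesis using True a' uL by (simp add: ioh_def algebra_simps)
      next
        case False
        hence "(a - L*m) div r < L" using a' by (simp add: less_mult_imp_div_less)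
        then show ?thesis using False a' yL by (simp add: ioh_def algebra_simps)
      qed
    qed (simp add: ioh_def)
    thus ?thesis using vI0 by simp
  qed
  have vI_eq: "vI t = ioh L m r u y t" if "L \<le> t" for t
    using that
  proof (induct t rule: dec_induct)
    case base then show ?case by (rule baseL)
  next
    case (step t)
    have "vI (Suc t) = Theta_mat L A B C *\<^sub>v vI t + Pi_mat L m r *\<^sub>v uI t" by (rule vI_dyn[OF step(1)])
    also have "uI t = u t" using uI_fb[OF step(1)] step(3) ctrl[OF step(1)] by simp
    also have "vI t = ioh L m r u y t" by (rule step(3))
    also have "Theta_mat L A B C *\<^sub>v ioh L m r u y t + Pi_mat L m r *\<^sub>v u t = ioh L m r u y (Suc t)"
      by (rule shift[OF step(1)])
    finally show ?case .
  qed
  show ?thesis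
  proof (intro allI impI conjI)
    fix t assume t: "L \<le> t"
    show "uI t = u t" using uI_fb[OF t] vI_eq[OF t] ctrl[OF t] by simp
    show "yI t = y t" using yI_out[OF t] vI_eq[OF t] yG[OF t] by simp
  qed
qed

end
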